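(* Let $\omega$ be a weight function with $\omega(t)=o(t)$ as $t\to\infty$, and let $\{W^x\}_{x>0}$ be its associated weight matrix. Then for every $x>0$, writing $M=W^x$ and $m_k=M_k/k!$, there is $C\ge1$ such that for all $t>0$: $$\omega^*(t)\le C\omega_M^*(t/C)+C,\qquad \omega_M^*(t)\le C\omega^*(t/C)+C,$$ $$\omega^*(t)\le C\omega_m(C/t)+C,\qquad \omega_m(t)\le C\omega^*\!\left(\tfrac{1}{eCt}\right)+C,$$ and in particular $\exp(\omega^*(t))\le\left(\frac{e}{h_m(t/C)}\right)^C$.
   Context: A weight function is a continuous increasing $\omega:[0,\infty)\to[0,\infty)$ with $\omega(0)=0$, $\omega(t)\to\infty$, $\omega(2t)=O(\omega(t))$, $\omega(t)=O(t)$, $\log t=o(\omega(t))$, and $\varphi(t)=\omega(e^t)$ convex; normalized so that $\omega|_{[0,1]}=0$, $\varphi^*(t)=\sup_{s\ge0}(st-\varphi(s))$. Weight matrix: $W^x_k=\exp(\frac1x\varphi^*(xk))$. Conjugate: $\omega^*(t)=\sup_{s\ge0}(\omega(s)-st)$. For a positive sequence $M$ with $M_0=1$: $\omega_M(t)=\sup_k\log(t^k/M_k)$, $h_m(t)=\inf_k m_kt^k$. *)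

theory Defs
  imports "HOL-Analysis.Analysis" "HOL-Library.Landau_Symbols"
begin

text \<open>Weight function (Braun--Meise--Taylor type), normalized so that it vanishes on [0,1].
  Only the values on [0,\<infinity>) are relevant; asymptotic conditions are at_top.\<close>
definition weight_function :: "(real \<Rightarrow> real) \<Rightarrow> bool" where
  "weight_function \<omega> \<longleftrightarrow>
     continuous_on {0..} \<omega> \<and>
     mono_on {0..} \<omega> \<and>
     (\<forall>t\<ge>0. \<omega> t \<ge> 0) \<and>
     \<omega> 0 = 0 \<and>
     filterlim \<omega> at_top at_top \<and>
     (\<lambda>t. \<omega> (2 * t)) \<in> O(\<omega>) \<and>
     \<omega> \<in> O(\<lambda>t. t) \<and>
     ln \<in> o(\<omega>) \<and>
     convex_on UNIV (\<lambda>t. \<omega> (exp t)) \<and>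
     (\<forall>t\<in>{0..1}. \<omega> t = 0)"

definition phi_star :: "(real \<Rightarrow> real) \<Rightarrow> real \<Rightarrow> real" where
  "phi_star \<omega> t = (SUP s\<in>{0..}. s * t - \<omega> (exp s))"

definition weight_matrix :: "(real \<Rightarrow> real) \<Rightarrow> real \<Rightarrow> nat \<Rightarrow> real" where
  "weight_matrix \<omega> x k = exp (phi_star \<omega> (x * real k) / x)"

definition wconj :: "(real \<Rightarrow> real) \<Rightarrow> real \<Rightarrow> real" where
  "wconj f t = (SUP s\<in>{0..}. f s - s * t)"

definition assoc_fun :: "(nat \<Rightarrow> real) \<Rightarrow> real \<Rightarrow> real" where
  "assoc_fun M t = (if t \<le> 0 then 0 else (SUP k. ln (t ^ k / M k)))"

definition h_fun :: "(nat \<Rightarrow> real) \<Rightarrow> real \<Rightarrow> real" where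
  "h_fun m t = (INF k. m k * t ^ k)"

end

theory Submission
  imports Defs
begin

lemma chord:
  fixes f :: "real \<Rightarrow> real"
  assumes "convex_on UNIV f" "a < b" "b < c"
  shows "(f b - f a) * (c - b) \<le> (f c - f b) * (b - a)"
proof -
  have 1: "(f a - f b) / (a - b) \<le> (f a - f c) / (a - c)"
   and 2: "(f a - f c) / (a - c) \<le> (f b - f c) / (b - c)"
    using convex_on_slope_le[OF assms(1), of a c b] assms by auto
  have "(f b - f a) / (b - a) \<le> (f c - f b) / (c - b)"
    using 1 2 by (smt (verit) minus_divide_divide)
  then show ?thesis using assms by (simp add: field_simps)
qed

lemma pow_fact_exp:
  fixes r :: real assumes "r \<ge> 0"
  shows "r ^ k / fact k \<le> exp r"
proof -
  have s: "(\<lambda>n. r^n /\<^sub>R fact n) sums exp r" by (rule exp_converges)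
  have "r ^ k / fact k = sum (\<lambda>n. r^n /\<^sub>R fact n) {k}" by (simp add: divide_inverse mult.commute)
  also have "\<dots> \<le> (\<Sum>n. r^n /\<^sub>R fact n)"
    using s assms by (intro sum_le_suminf) (auto simp: sums_iff)
  finally have "r ^ k / fact k \<le> (\<Sum>n. r^n /\<^sub>R fact n)" .
  thus ?thesis using s by (simp add: sums_iff divide_inverse mult.commute)
qed

lemma wf_unpack:
  assumes "weight_function \<omega>"
  shows "mono_on {0..} \<omega>" "\<And>t. t \<ge> 0 \<Longrightarrow> \<omega> t \<ge> 0" "\<omega> 0 = 0"
    "(\<lambda>t. \<omega> (2 * t)) \<in> O(\<omega>)" "ln \<in> o(\<omega>)" "convex_on UNIV (\<lambda>t. \<omega> (exp t))"
    "\<And>t. 0 \<le> t \<Longrightarrow> t \<le> 1 \<Longrightarrow> \<omega> t = 0"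
  using assms unfolding weight_function_def by auto

lemma mono_om: "weight_function \<omega> \<Longrightarrow> 0 \<le> a \<Longrightarrow> a \<le> b \<Longrightarrow> \<omega> a \<le> \<omega> b"
  using wf_unpack(1) by (metis atLeast_iff mono_onD order_trans)

context
  fixes \<omega> :: "real \<Rightarrow> real"
  assumes wf: "weight_function \<omega>"
begin

lemma om_nonneg: "t \<ge> 0 \<Longrightarrow> \<omega> t \<ge> 0" using wf_unpack(2)[OF wf] .

lemma phi_bdd: "bdd_above ((\<lambda>s. s * y - \<omega> (exp s)) ` {0..})"
proof -
  define c where "c = 1 / (\<bar>y\<bar> + 1)"
  have c: "c > 0" by (simp add: c_def add_pos_nonneg)
  have "eventually (\<lambda>u. norm (ln u) \<le> c * norm (\<omega> u)) at_top"
    using landau_o.smallD[OF wf_unpack(5)[OF wf] c] .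
  then obtain U where U: "\<And>u. u \<ge> U \<Longrightarrow> norm (ln u) \<le> c * norm (\<omega> u)"
    by (auto simp: eventually_at_top_linorder)
  define V where "V = max U 1"
  have "s * y - \<omega> (exp s) \<le> ln V * \<bar>y\<bar>" if s: "s \<ge> 0" for s
  proof (cases "exp s \<ge> V")
    case True
    hence "exp s \<ge> U" using V_def by auto
    hence "norm (ln (exp s)) \<le> c * norm (\<omega> (exp s))" by (rule U)
    hence "s \<le> c * \<omega> (exp s)" using s om_nonneg[of "exp s"] by (simp add: abs_of_nonneg)
    hence "s * (\<bar>y\<bar> + 1) \<le> \<omega> (exp s)" using c by (simp add: c_def field_simps)
    moreover have "ln V \<ge> 0" using V_def by simp
    ultimately show ?thesis using s
      by (smt (verit, ccfv_SIG) abs_ge_self distrib_left mult_nonneg_nonneg mult.commute)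
  next
    case False
    hence "s \<le> ln V" using V_def by (metis exp_gt_zero exp_le_cancel_iff exp_ln linorder_not_le order_less_imp_le less_max_iff_disj zero_less_one order.strict_trans2)
    hence "s * y \<le> ln V * \<bar>y\<bar>" using s
      by (smt (verit) abs_ge_self abs_ge_zero mult_left_mono mult_right_mono)
    thus ?thesis using om_nonneg[of "exp s"] by simp
  qed
  thus ?thesis by (auto intro!: bdd_aboveI2)
qed

lemma phi_upper: "s \<ge> 0 \<Longrightarrow> s * y - \<omega> (exp s) \<le> phi_star \<omega> y"
  unfolding phi_star_def using phi_bdd[of y] by (intro cSUP_upper) auto

lemma phi_nonneg: "phi_star \<omega> y \<ge> 0"
  using phi_upper[of 0 y] wf_unpack(7)[OF wf, of 1] by simp

lemma phi_zero: "phi_star \<omega> 0 = 0"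
proof -
  have "phi_star \<omega> 0 \<le> 0" unfolding phi_star_def
    by (rule cSUP_least) (auto intro: om_nonneg)
  thus ?thesis using phi_nonneg[of 0] by simp
qed

end


context
  fixes \<omega> :: "real \<Rightarrow> real" and x :: real
  assumes wf: "weight_function \<omega>" and xpos: "x > 0"
begin

lemma M_pos: "weight_matrix \<omega> x k > 0" by (simp add: weight_matrix_def)

lemma M_0: "weight_matrix \<omega> x 0 = 1" by (simp add: weight_matrix_def phi_zero[OF wf])

lemma ln_term: "u > 0 \<Longrightarrow> ln (u ^ k / weight_matrix \<omega> x k) = real k * ln u - phi_star \<omega> (x * real k) / x"
  by (simp add: weight_matrix_def ln_div ln_realpow)

lemma term_bound: "u > 0 \<Longrightarrow> ln (u ^ k / weight_matrix \<omega> x k) \<le> \<omega> u / x"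
proof -
  assume u: "u > 0"
  show ?thesis
  proof (cases "u \<ge> 1")
    case True
    have "ln u * (x * real k) - \<omega> (exp (ln u)) \<le> phi_star \<omega> (x * real k)"
      using True by (intro phi_upper[OF wf]) auto
    hence "x * (real k * ln u) - \<omega> u \<le> phi_star \<omega> (x * real k)" using u by (simp add: algebra_simps)
    hence "(x * (real k * ln u)) / x \<le> (\<omega> u + phi_star \<omega> (x * real k)) / x" using xpos
      by (intro divide_right_mono) auto
    hence "real k * ln u - phi_star \<omega> (x * real k) / x \<le> \<omega> u / x" using xpos
      by (simp add: add_divide_distrib)
    thus ?thesis using ln_term[OF u] by simp
  next
    case False
    hence "ln u < 0" using u by simp
    hence "real k * ln u \<le> 0" by (simp add: mult_nonneg_nonpos)
    moreover have "phi_star \<omega> (x * real k) / x \<ge> 0" using phi_nonneg[OF wf] xpos by simp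
    moreover have "\<omega> u / x \<ge> 0" using om_nonneg[OF wf, of u] u xpos by simp
    ultimately show ?thesis using ln_term[OF u, of k] by linarith
  qed
qed

lemma omM_bdd: "u > 0 \<Longrightarrow> bdd_above (range (\<lambda>k. ln (u ^ k / weight_matrix \<omega> x k)))"
  using term_bound by (auto intro!: bdd_aboveI2)

lemma omM_upper: "u > 0 \<Longrightarrow> ln (u ^ k / weight_matrix \<omega> x k) \<le> assoc_fun (weight_matrix \<omega> x) u"
  unfolding assoc_fun_def using omM_bdd[of u] by (auto intro!: cSUP_upper)

lemma omM_le: "u \<ge> 0 \<Longrightarrow> assoc_fun (weight_matrix \<omega> x) u \<le> \<omega> u / x"
  unfolding assoc_fun_def using term_bound wf_unpack(3)[OF wf]
  by (auto intro!: cSUP_least)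

lemma omM_nonneg: "u \<ge> 0 \<Longrightarrow> assoc_fun (weight_matrix \<omega> x) u \<ge> 0"
proof (cases "u = 0")
  case False
  assume "u \<ge> 0" hence "u > 0" using False by simp
  from omM_upper[OF this, of 0] show ?thesis by (simp add: M_0)
qed (simp add: assoc_fun_def)


lemma key_lower:
  assumes t: "t \<ge> 1"
  shows "\<omega> (t / exp 1) - x * ln t \<le> x * assoc_fun (weight_matrix \<omega> x) t"
proof -
  define \<phi> where "\<phi> r = \<omega> (exp r)" for r
  define s where "s = ln t"
  have s0: "s \<ge> 0" using t s_def by simp
  have cvx: "convex_on UNIV \<phi>" using wf_unpack(6)[OF wf] by (simp add: \<phi>_def[abs_def])
  have phimono: "\<phi> a \<le> \<phi> b" if "a \<le> b" for a b
    unfolding \<phi>_def using that by (intro mono_om[OF wf]) auto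
  define y where "y = \<phi> s - \<phi> (s - 1)"
  have y0: "y \<ge> 0" using phimono[of "s-1" s] by (simp add: y_def)
  define k where "k = nat \<lfloor>y / x\<rfloor>"
  have fl: "real_of_int \<lfloor>y / x\<rfloor> \<le> y / x" "y / x < real_of_int \<lfloor>y / x\<rfloor> + 1" by linarith+
  have "y / x \<ge> 0" using y0 xpos by simp
  hence kk: "real k = real_of_int \<lfloor>y / x\<rfloor>" unfolding k_def by simp
  have "x * real k \<le> x * (y / x)" using fl(1) kk xpos by (intro mult_left_mono) auto
  hence k1: "x * real k \<le> y" using xpos by simp
  have "x * (y / x) < x * (real k + 1)" using fl(2) kk xpos by (intro mult_strict_left_mono) auto
  hence k2: "y - x * real k < x" using xpos by (simp add: algebra_simps)
  have main: "r * y - \<phi> r \<le> y * s - \<phi> (s - 1)" for r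
  proof -
    consider "r \<ge> s" | "s - 1 \<le> r" "r < s" | "r < s - 1" by linarith
    thus ?thesis
    proof cases
      case 1
      have "\<phi> s + y * (r - s) \<le> \<phi> r"
      proof (cases "r = s")
        case False
        hence "s < r" using 1 by simp
        from chord[OF cvx, of "s-1" s r] this have "y * (r - s) \<le> \<phi> r - \<phi> s"
          by (simp add: y_def)
        thus ?thesis by simp
      qed simp
      thus ?thesis using phimono[of "s-1" s] by (simp add: algebra_simps)
    next
      case 2
      have "r * y \<le> s * y" using 2 y0 by (simp add: mult_right_mono)
      thus ?thesis using phimono[of "s-1" r] 2 by (simp add: algebra_simps)
    next
      case 3
      from chord[OF cvx, of r "s-1" s] 3 have "\<phi> (s-1) - \<phi> r \<le> y * (s - 1 - r)"
        by (simp add: y_def mult.commute)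
      thus ?thesis using y0 by (simp add: algebra_simps)
    qed
  qed
  have ps: "phi_star \<omega> (x * real k) \<le> y * s - \<phi> (s - 1)"
    unfolding phi_star_def
  proof (rule cSUP_least)
    fix r :: real assume "r \<in> {0..}"
    hence "r * (x * real k) \<le> r * y" using k1 by (simp add: mult_left_mono)
    thus "r * (x * real k) - \<omega> (exp r) \<le> y * s - \<phi> (s - 1)" using main[of r] by (simp add: \<phi>_def)
  qed simp
  have tpos: "t > 0" using t by simp
  have "x * ln (t ^ k / weight_matrix \<omega> x k) = x * real k * s - phi_star \<omega> (x * real k)"
    using ln_term[OF tpos, of k] xpos by (simp add: s_def right_diff_distrib)
  also have "\<dots> \<ge> \<phi> (s - 1) - x * s"
  proof -
    have "(y - x * real k) * s \<le> x * s" using k2 s0 by (simp add: mult_right_mono)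
    thus ?thesis using ps by (simp add: algebra_simps)
  qed
  finally have "\<phi> (s - 1) - x * s \<le> x * assoc_fun (weight_matrix \<omega> x) t"
    using omM_upper[OF tpos, of k] xpos by (smt (verit) mult_left_mono)
  moreover have "\<phi> (s - 1) = \<omega> (t / exp 1)" using tpos by (simp add: \<phi>_def s_def exp_diff)
  ultimately show ?thesis by (simp add: s_def)
qed


lemma lower_C: "\<exists>C\<ge>1. \<forall>u\<ge>0. \<omega> u \<le> C * assoc_fun (weight_matrix \<omega> x) u + C"
proof -
  let ?oM = "assoc_fun (weight_matrix \<omega> x)"
  obtain K where K: "K > 0" "eventually (\<lambda>u. norm (\<omega> (2*u)) \<le> K * norm (\<omega> u)) at_top"
    using landau_o.bigE[OF wf_unpack(4)[OF wf]] by blast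
  have c: "1 / (2*x) > 0" using xpos by simp
  have "eventually (\<lambda>u. norm (ln u) \<le> 1 / (2*x) * norm (\<omega> u)) at_top"
    using landau_o.smallD[OF wf_unpack(5)[OF wf] c] .
  with K(2) have "eventually (\<lambda>u. norm (\<omega> (2*u)) \<le> K * norm (\<omega> u) \<and> norm (ln u) \<le> 1 / (2*x) * norm (\<omega> u)) at_top"
    by (rule eventually_conj)
  then obtain U0 where U0: "\<And>u. u \<ge> U0 \<Longrightarrow> norm (\<omega> (2*u)) \<le> K * norm (\<omega> u) \<and> norm (ln u) \<le> 1 / (2*x) * norm (\<omega> u)"
    by (auto simp: eventually_at_top_linorder)
  define U where "U = max U0 1"
  have U1: "U \<ge> 1" by (simp add: U_def)
  have UK: "\<omega> (2*u) \<le> K * \<omega> u" "ln u \<le> \<omega> u / (2*x)" if "u \<ge> U" for u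
  proof -
    have u0: "u \<ge> 1" "u \<ge> U0" using that U_def by auto
    have "\<omega> (2*u) \<ge> 0" "\<omega> u \<ge> 0" "ln u \<ge> 0" using u0 om_nonneg[OF wf] by auto
    thus "\<omega> (2*u) \<le> K * \<omega> u" "ln u \<le> \<omega> u / (2*x)" using U0[OF u0(2)] by auto
  qed
  define T where "T = exp 1 * U"
  have "(1::real) * 1 \<le> exp 1 * U" using U1 by (intro mult_mono) auto
  hence T1: "T \<ge> 1" by (simp add: T_def)
  define C where "C = max 1 (max (2 * K^2 * x) (\<omega> T))"
  have "\<omega> t \<le> C * ?oM t + C" if t: "t \<ge> 0" for t
  proof (cases "t \<ge> T")
    case False
    have "\<omega> t \<le> \<omega> T" using False t by (intro mono_om[OF wf]) auto
    moreover have "C * ?oM t \<ge> 0" using omM_nonneg[OF t] C_def by simp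
    ultimately show ?thesis unfolding C_def by linarith
  next
    case True
    define u where "u = t / exp 1"
    have uU: "u \<ge> U" using True by (simp add: u_def T_def field_simps)
    have tu: "t = exp 1 * u" by (simp add: u_def)
    have t1: "t \<ge> 1" using True T1 by simp
    have "exp (1::real) \<le> 4" using exp_le by simp
    hence "exp 1 * u \<le> 4 * u" using uU U1 by (intro mult_right_mono) auto
    hence "t \<le> 2 * (2 * u)" using tu by simp
    hence "\<omega> t \<le> \<omega> (2 * (2 * u))" using t by (intro mono_om[OF wf]) auto
    also have "\<dots> \<le> K * \<omega> (2 * u)" using UK(1)[of "2*u"] uU U1 by simp
    also have "\<dots> \<le> K * (K * \<omega> u)" using UK(1)[OF uU] K(1) by simp
    finally have w1: "\<omega> t \<le> K^2 * \<omega> u" by (simp add: power2_eq_square)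
    have "x * ln t = x + x * ln u" using tu uU U1 by (simp add: ln_mult algebra_simps)
    also have "\<dots> \<le> x + \<omega> u / 2"
    proof -
      have "x * ln u \<le> x * (\<omega> u / (2*x))" using UK(2)[OF uU] xpos by (intro mult_left_mono) auto
      thus ?thesis using xpos by simp
    qed
    finally have "\<omega> u / 2 - x \<le> x * ?oM t" using key_lower[OF t1] by (simp add: u_def)
    hence "\<omega> u \<le> 2 * x * ?oM t + 2 * x" by simp
    hence "K^2 * \<omega> u \<le> K^2 * (2 * x * ?oM t + 2 * x)" by (simp add: mult_left_mono)
    hence w2: "\<omega> t \<le> (2 * K^2 * x) * ?oM t + 2 * K^2 * x" using w1 by (simp add: algebra_simps)
    have "(2 * K^2 * x) * ?oM t \<le> C * ?oM t" using omM_nonneg[OF t] C_def by (intro mult_right_mono) auto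
    thus ?thesis using w2 C_def by linarith
  qed
  moreover have "C \<ge> 1" by (simp add: C_def)
  ultimately show ?thesis by blast
qed


end

context
  fixes \<omega> :: "real \<Rightarrow> real"
  assumes wf: "weight_function \<omega>" and so: "\<omega> \<in> o(\<lambda>t. t)"
begin

lemma conj_bdd: assumes t: "t > 0" shows "bdd_above ((\<lambda>s. \<omega> s - s * t) ` {0..})"
proof -
  have "eventually (\<lambda>s. norm (\<omega> s) \<le> t * norm s) at_top"
    using landau_o.smallD[OF so t] .
  then obtain S0 where S0: "\<And>s. s \<ge> S0 \<Longrightarrow> norm (\<omega> s) \<le> t * norm s"
    by (auto simp: eventually_at_top_linorder)
  define S where "S = max S0 0"
  have "\<omega> s - s * t \<le> \<omega> S" if s: "s \<ge> 0" for s
  proof (cases "s \<ge> S")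
    case True
    hence "s \<ge> S0" using S_def by auto
    hence "norm (\<omega> s) \<le> t * norm s" by (rule S0)
    hence "\<omega> s \<le> s * t" using s by (simp add: mult.commute)
    moreover have "\<omega> S \<ge> 0" using om_nonneg[OF wf] S_def by simp
    ultimately show ?thesis by simp
  next
    case False
    hence "\<omega> s \<le> \<omega> S" using s by (intro mono_om[OF wf]) auto
    moreover have "s * t \<ge> 0" using s t by simp
    ultimately show ?thesis by simp
  qed
  thus ?thesis by (auto intro!: bdd_aboveI2)
qed

lemma conj_upper: "t > 0 \<Longrightarrow> s \<ge> 0 \<Longrightarrow> \<omega> s - s * t \<le> wconj \<omega> t"
  unfolding wconj_def using conj_bdd[of t] by (intro cSUP_upper) auto

lemma conj_nonneg: "t > 0 \<Longrightarrow> wconj \<omega> t \<ge> 0"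
  using conj_upper[of t 0] wf_unpack(3)[OF wf] by simp

lemma conj_anti: assumes "0 < a" "a \<le> b" shows "wconj \<omega> b \<le> wconj \<omega> a"
  unfolding wconj_def[of _ b]
proof (rule cSUP_least)
  fix s :: real assume "s \<in> {0..}"
  hence "\<omega> s - s * b \<le> \<omega> s - s * a" using assms by (simp add: mult_left_mono)
  also have "\<dots> \<le> wconj \<omega> a" using conj_upper[of a s] assms \<open>s \<in> {0..}\<close> by auto
  finally show "\<omega> s - s * b \<le> wconj \<omega> a" .
qed simp

context
  fixes x :: real
  assumes xpos: "x > 0"
begin

abbreviation "MM \<equiv> weight_matrix \<omega> x"
abbreviation "mm \<equiv> (\<lambda>k. weight_matrix \<omega> x k / fact k)"

lemma omMconj_bound: assumes v: "v > 0" and s: "s \<ge> 0"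
  shows "assoc_fun MM s - s * v \<le> wconj \<omega> (x * v) / x"
proof -
  have "assoc_fun MM s \<le> \<omega> s / x" by (rule omM_le[OF wf xpos s])
  hence "assoc_fun MM s - s * v \<le> (\<omega> s - s * (x * v)) / x" using xpos by (simp add: diff_divide_distrib)
  also have "\<dots> \<le> wconj \<omega> (x * v) / x" using conj_upper[of "x * v" s] v s xpos
    by (intro divide_right_mono) auto
  finally show ?thesis .
qed

lemma omMconj_bdd: "v > 0 \<Longrightarrow> bdd_above ((\<lambda>s. assoc_fun MM s - s * v) ` {0..})"
  using omMconj_bound by (auto intro!: bdd_aboveI2)

lemma omMconj_upper: "v > 0 \<Longrightarrow> s \<ge> 0 \<Longrightarrow> assoc_fun MM s - s * v \<le> wconj (assoc_fun MM) v"
  unfolding wconj_def using omMconj_bdd[of v] by (intro cSUP_upper) auto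

lemma omMconj_nonneg: "v > 0 \<Longrightarrow> wconj (assoc_fun MM) v \<ge> 0"
  using omMconj_upper[of v 0] by (simp add: assoc_fun_def)

lemma mterm_bound: assumes v: "v > 0"
  shows "ln (v ^ k / mm k) \<le> wconj \<omega> (x / (exp 1 * v)) / x"
proof (cases "k = 0")
  case True
  thus ?thesis using M_0[OF wf xpos] conj_nonneg[of "x / (exp 1 * v)"] v xpos by simp
next
  case False
  define u where "u = exp 1 * v * real k"
  have u: "u > 0" using False v by (simp add: u_def)
  have "fact k \<le> (real k) ^ k" using fact_le_power[of k] by simp
  hence "v ^ k * fact k / MM k \<le> v ^ k * (real k) ^ k / MM k"
    using M_pos[OF wf xpos, of k] v by (intro divide_right_mono mult_left_mono) auto
  moreover have "0 < v ^ k * fact k / MM k" using M_pos[OF wf xpos, of k] v by simp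
  ultimately have "ln (v ^ k * fact k / MM k) \<le> ln (v ^ k * (real k) ^ k / MM k)"
    by (subst ln_le_cancel_iff) auto
  moreover have "v ^ k / mm k = v ^ k * fact k / MM k" by simp
  ultimately have "ln (v ^ k / mm k) \<le> ln (v ^ k * (real k) ^ k / MM k)" by simp
  also have "v ^ k * (real k) ^ k / MM k = (u ^ k / MM k) * exp (- real k)"
    by (simp add: u_def power_mult_distrib exp_of_nat_mult[symmetric] exp_minus field_simps)
  also have "ln \<dots> = ln (u ^ k / MM k) - real k"
  proof -
    have p1: "u ^ k / MM k > 0" using u M_pos[OF wf xpos, of k] by simp
    show ?thesis using p1 u by (subst ln_mult) auto
  qed
  also have "\<dots> \<le> \<omega> u / x - real k" using term_bound[OF wf xpos u] by simp
  also have "\<dots> = (\<omega> u - u * (x / (exp 1 * v))) / x" using xpos v by (simp add: u_def field_simps)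
  also have "\<dots> \<le> wconj \<omega> (x / (exp 1 * v)) / x"
    using conj_upper[of "x / (exp 1 * v)" u] u v xpos by (intro divide_right_mono) auto
  finally show ?thesis .
qed

lemma om_m_upper: "v > 0 \<Longrightarrow> ln (v ^ k / mm k) \<le> assoc_fun mm v"
  unfolding assoc_fun_def using mterm_bound[of v] by (auto intro!: cSUP_upper bdd_aboveI2)

lemma om_m_le: "v > 0 \<Longrightarrow> assoc_fun mm v \<le> wconj \<omega> (x / (exp 1 * v)) / x"
  unfolding assoc_fun_def using mterm_bound[of v] by (auto intro!: cSUP_least)

lemma om_m_nonneg: "v > 0 \<Longrightarrow> assoc_fun mm v \<ge> 0"
  using om_m_upper[of v 0] M_0[OF wf xpos] by simp

lemma omM_le_m: assumes w: "w > 0" and s: "s \<ge> 0"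
  shows "assoc_fun MM s - s * w \<le> assoc_fun mm (1 / w)"
proof (cases "s = 0")
  case True
  thus ?thesis using om_m_nonneg[of "1/w"] w by (simp add: assoc_fun_def)
next
  case False
  hence sp: "s > 0" using s by simp
  have "assoc_fun MM s \<le> assoc_fun mm (1 / w) + s * w"
    unfolding assoc_fun_def[of MM] using sp
  proof (simp, intro cSUP_least)
    fix k
    have Mp: "MM k > 0" by (rule M_pos[OF wf xpos])
    have "(s * w) ^ k / fact k \<le> exp (s * w)" using sp w by (intro pow_fact_exp) auto
    hence "ln ((s * w) ^ k / fact k) \<le> s * w" using sp w
      by (metis divide_pos_pos exp_gt_zero fact_gt_zero ln_exp ln_le_cancel_iff zero_less_power mult_pos_pos)
    moreover have "ln (s ^ k / MM k) = ln ((1 / w) ^ k / mm k) + ln ((s * w) ^ k / fact k)"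
    proof -
      have eq: "s ^ k / MM k = ((1 / w) ^ k / mm k) * ((s * w) ^ k / fact k)"
        using w Mp by (simp add: power_mult_distrib field_simps)
      have p1: "(1 / w) ^ k / mm k > 0" and p2: "(s * w) ^ k / fact k > 0" using w sp Mp by auto
      show ?thesis unfolding eq by (subst ln_mult) (use p1 p2 w sp in auto)
    qed
    moreover have "ln ((1 / w) ^ k / mm k) \<le> assoc_fun mm (1 / w)" using om_m_upper[of "1/w" k] w by simp
    ultimately show "ln (s ^ k / MM k) \<le> assoc_fun mm (1 / w) + s * w" by linarith
  qed simp
  thus ?thesis by simp
qed

end

end


theorem corollary3p11:
  fixes \<omega> :: "real \<Rightarrow> real" and x :: real
  assumes "weight_function \<omega>"
    and "\<omega> \<in> o(\<lambda>t. t)"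
    and "x > 0"
  shows "\<exists>C\<ge>1. \<forall>t>0.
     (let M = weight_matrix \<omega> x; m = (\<lambda>k. M k / fact k) in
        wconj \<omega> t \<le> C * wconj (assoc_fun M) (t / C) + C \<and>
        wconj (assoc_fun M) t \<le> C * wconj \<omega> (t / C) + C \<and>
        wconj \<omega> t \<le> C * assoc_fun m (C / t) + C \<and>
        assoc_fun m t \<le> C * wconj \<omega> (1 / (exp 1 * C * t)) + C \<and>
        exp (wconj \<omega> t) \<le> (exp 1 / h_fun m (t / C)) powr C)"
proof -
  note wf = assms(1) and so = assms(2) and xpos = assms(3)
  define M where "M = weight_matrix \<omega> x"
  define m where "m = (\<lambda>k. M k / fact k)"
  obtain C0 where C0: "C0 \<ge> 1" "\<And>u. u \<ge> 0 \<Longrightarrow> \<omega> u \<le> C0 * assoc_fun M u + C0"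
    using lower_C[OF wf xpos] unfolding M_def by blast
  define C where "C = max C0 (1 / x)"
  have C1: "C \<ge> 1" "C \<ge> C0" "1 / x \<le> C" using C0(1) by (auto simp: C_def)
  have Cx: "1 / C \<le> x" using C1 xpos by (simp add: field_simps)
  have Cpos: "C > 0" using C1 by simp
  have low: "\<omega> u \<le> C * assoc_fun M u + C" if "u \<ge> 0" for u
  proof -
    have "C0 * assoc_fun M u \<le> C * assoc_fun M u"
      using omM_nonneg[OF wf xpos that] C1 unfolding M_def by (intro mult_right_mono) auto
    thus ?thesis using C0(2)[OF that] C1 by linarith
  qed
  have key: "wconj \<omega> t \<le> C * assoc_fun m (C / t) + C" if t: "t > 0" for t
    unfolding wconj_def[of \<omega>]
  proof (rule cSUP_least)
    fix s :: real assume s: "s \<in> {0..}"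
    have "\<omega> s - s * t \<le> C * (assoc_fun M s - s * (t / C)) + C"
    proof -
      have "C * (assoc_fun M s - s * (t / C)) = C * assoc_fun M s - s * t" using Cpos
        by (simp add: right_diff_distrib)
      thus ?thesis using low[of s] s by simp
    qed
    also have "\<dots> \<le> C * assoc_fun m (1 / (t / C)) + C"
      using omM_le_m[OF wf so xpos, of "t / C" s] s t Cpos unfolding M_def m_def
      by (intro add_right_mono mult_left_mono) auto
    finally show "\<omega> s - s * t \<le> C * assoc_fun m (C / t) + C" by simp
  qed simp
  have "\<forall>t>0. wconj \<omega> t \<le> C * wconj (assoc_fun M) (t / C) + C \<and>
        wconj (assoc_fun M) t \<le> C * wconj \<omega> (t / C) + C \<and>
        wconj \<omega> t \<le> C * assoc_fun m (C / t) + C \<and>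
        assoc_fun m t \<le> C * wconj \<omega> (1 / (exp 1 * C * t)) + C \<and>
        exp (wconj \<omega> t) \<le> (exp 1 / h_fun m (t / C)) powr C"
  proof (intro allI impI conjI)
    fix t :: real assume t: "t > 0"
    have tC: "t / C > 0" using t Cpos by simp
    show "wconj \<omega> t \<le> C * wconj (assoc_fun M) (t / C) + C"
      unfolding wconj_def[of \<omega>]
    proof (rule cSUP_least)
      fix s :: real assume s: "s \<in> {0..}"
      have "\<omega> s - s * t \<le> C * (assoc_fun M s - s * (t / C)) + C"
      proof -
        have "C * (assoc_fun M s - s * (t / C)) = C * assoc_fun M s - s * t" using Cpos
          by (simp add: right_diff_distrib)
        thus ?thesis using low[of s] s by simp
      qed
      also have "\<dots> \<le> C * wconj (assoc_fun M) (t / C) + C"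
        using omMconj_upper[OF wf so xpos tC, of s] s Cpos unfolding M_def
        by (intro add_right_mono mult_left_mono) auto
      finally show "\<omega> s - s * t \<le> C * wconj (assoc_fun M) (t / C) + C" .
    qed simp
    show "wconj (assoc_fun M) t \<le> C * wconj \<omega> (t / C) + C"
      unfolding wconj_def[of "assoc_fun M"]
    proof (rule cSUP_least)
      fix s :: real assume s: "s \<in> {0..}"
      have "assoc_fun M s - s * t \<le> wconj \<omega> (x * t) / x"
        using omMconj_bound[OF wf so xpos t, of s] s unfolding M_def by auto
      also have "\<dots> \<le> wconj \<omega> (t / C) / x"
      proof -
        have "(1 / C) * t \<le> x * t" using Cx t by (intro mult_right_mono) auto
        hence "t / C \<le> x * t" by simp
        thus ?thesis using conj_anti[OF wf so tC] xpos by (intro divide_right_mono) auto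
      qed
      also have "\<dots> \<le> C * wconj \<omega> (t / C)"
      proof -
        have "wconj \<omega> (t / C) * (1 / x) \<le> wconj \<omega> (t / C) * C"
          using conj_nonneg[OF wf so tC] C1 by (intro mult_left_mono) auto
        thus ?thesis by (simp add: mult.commute)
      qed
      finally show "assoc_fun M s - s * t \<le> C * wconj \<omega> (t / C) + C" using C1 by linarith
    qed simp
    show "wconj \<omega> t \<le> C * assoc_fun m (C / t) + C" by (rule key[OF t])
    show "assoc_fun m t \<le> C * wconj \<omega> (1 / (exp 1 * C * t)) + C"
    proof -
      have e: "1 / (exp 1 * C * t) > 0" using t Cpos by simp
      have "assoc_fun m t \<le> wconj \<omega> (x / (exp 1 * t)) / x"
        using om_m_le[OF wf so xpos t] unfolding m_def M_def .
      also have "\<dots> \<le> wconj \<omega> (1 / (exp 1 * C * t)) / x"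
      proof -
        have "1 / (exp 1 * C * t) \<le> x / (exp 1 * t)"
        proof -
          have "1 / (exp 1 * C * t) = (1 / C) / (exp 1 * t)" by simp
          also have "\<dots> \<le> x / (exp 1 * t)" using Cx t by (intro divide_right_mono) auto
          finally show ?thesis .
        qed
        thus ?thesis using conj_anti[OF wf so e] xpos by (intro divide_right_mono) auto
      qed
      also have "\<dots> \<le> C * wconj \<omega> (1 / (exp 1 * C * t))"
      proof -
        have "wconj \<omega> (1 / (exp 1 * C * t)) * (1 / x) \<le> wconj \<omega> (1 / (exp 1 * C * t)) * C"
          using conj_nonneg[OF wf so e] C1 by (intro mult_left_mono) auto
        thus ?thesis by (simp add: mult.commute)
      qed
      finally show ?thesis using C1 by linarith
    qed
    show "exp (wconj \<omega> t) \<le> (exp 1 / h_fun m (t / C)) powr C"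
    proof -
      define v where "v = t / C"
      have v: "v > 0" using tC v_def by simp
      define a where "a = assoc_fun m (1 / v)"
      have av: "1 / v = C / t" by (simp add: v_def)
      have mpos: "m k > 0" for k unfolding m_def M_def using M_pos[OF wf xpos] by simp
      have tl: "ln ((1 / v) ^ k / m k) \<le> a" for k
        unfolding a_def m_def M_def using om_m_upper[OF wf so xpos, of "1/v" k] v by simp
      have tl2: "exp (- a) \<le> m k * v ^ k" for k
      proof -
        have "(1 / v) ^ k / m k = 1 / (m k * v ^ k)" by (simp add: power_one_over)
        hence "ln (1 / (m k * v ^ k)) \<le> a" using tl[of k] by simp
        hence "- ln (m k * v ^ k) \<le> a" using mpos[of k] v by (simp add: ln_div)
        hence "ln (exp (- a)) \<le> ln (m k * v ^ k)" by simp
        thus ?thesis using mpos[of k] v by (subst (asm) ln_le_cancel_iff) auto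
      qed
      have hge: "exp (- a) \<le> h_fun m v"
        unfolding h_fun_def by (rule cINF_greatest) (auto intro: tl2)
      have hpos: "h_fun m v > 0" by (rule less_le_trans[OF exp_gt_zero hge])
      have hle: "h_fun m v \<le> exp (- a)"
      proof -
        have eqA: "a = (SUP k. ln ((1 / v) ^ k / m k))" unfolding a_def assoc_fun_def using v by auto
        have "a \<le> - ln (h_fun m v)"
          unfolding eqA
        proof (rule cSUP_least)
          fix k
          have "h_fun m v \<le> m k * v ^ k" unfolding h_fun_def
            by (rule cINF_lower) (auto intro!: bdd_belowI2[where m=0] simp: mpos v less_imp_le)
          hence "ln (h_fun m v) \<le> ln (m k * v ^ k)" using hpos by simp
          moreover have "ln ((1 / v) ^ k / m k) = - ln (m k * v ^ k)"
          proof -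
            have "(1/v) ^ k / m k = 1 / (m k * v ^ k)" by (simp add: power_one_over)
            moreover have "m k * v ^ k > 0" using mpos[of k] v by simp
            ultimately show ?thesis using mpos[of k] v by (simp add: ln_div)
          qed
          ultimately show "ln ((1 / v) ^ k / m k) \<le> - ln (h_fun m v)" by simp
        qed simp
        hence "ln (h_fun m v) \<le> - a" by linarith
        hence "exp (ln (h_fun m v)) \<le> exp (- a)" by simp
        thus ?thesis using hpos by simp
      qed
      have h: "h_fun m v = exp (- a)" using hge hle by simp
      have "exp 1 / h_fun m v = exp (1 + a)" by (simp add: h exp_diff exp_add exp_minus field_simps)
      hence "(exp 1 / h_fun m v) powr C = exp (C * (1 + a))" by (simp add: powr_def)
      moreover have "wconj \<omega> t \<le> C * (1 + a)" using key[OF t] av by (simp add: a_def algebra_simps)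
      ultimately show ?thesis by (simp add: v_def)
    qed
  qed
  thus ?thesis using C1 unfolding Let_def M_def[symmetric] m_def[symmetric] by blast
qed

end
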